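(* In the upper half-plane model of $\mathbb{H}^2$, let $B_i=B(c_i,r_i)$, $i\in\mathbb{N}$, be pairwise disjoint closed Euclidean disks with centers $c_i\in\mathbb{Z}\subset\mathbb{R}$ and radii $r_i\le1$, with $|c_i-c_j|>1$ for $i\ne j$, let $h_i$ be the inversion in $\partial B_i$, and $C_i=\partial B_i\cap\mathbb{H}^2$. Fix $k\in\mathbb{N}_0$; for $n\ge1$ let $I_{k,n}$ be the set of multi-indices $\underline{i}=(i_1,\dots,i_n)$ with all $i_m>k$ and $i_m\ne i_{m+1}$, and let $r_{\underline{i}}$ be the Euclidean radius of the semicircle $h_{i_1}\circ\cdots\circ h_{i_{n-1}}(C_{i_n})$. Let $\alpha>0$. If $$\sum_{i\ne j,\ i>k,\ j>k}\left(\frac{1}{|c_i-c_j|-1}\right)^{2\alpha}\le1,$$ then for every $n\ge2$, $$\sum_{\underline{i}\in I_{k,n}}r_{\underline{i}}^{\alpha}\le\sum_{\underline{j}\in I_{k,n-1}}r_{\underline{j}}^{\alpha}.$$ *)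

theory Defs
  imports "HOL-Analysis.Analysis"
begin

definition upper_half :: "complex set" where
  "upper_half = {z. Im z > 0}"

definition inversion :: "real \<Rightarrow> real \<Rightarrow> complex \<Rightarrow> complex" where
  "inversion c r z = complex_of_real c + complex_of_real (r^2) / cnj (z - complex_of_real c)"

definition semicircle :: "real \<Rightarrow> real \<Rightarrow> complex set" where
  "semicircle c r = sphere (complex_of_real c) r \<inter> upper_half"

definition semicircle_radius :: "complex set \<Rightarrow> real" where
  "semicircle_radius S = (THE r. r > 0 \<and> (\<exists>c. S = semicircle c r))"

definition multi_indices :: "nat \<Rightarrow> nat \<Rightarrow> nat list set" where
  "multi_indices k n = {is. length is = n \<and> (\<forall>m\<in>set is. m > k) \<and>
                            (\<forall>m. Suc m < n \<longrightarrow> is ! m \<noteq> is ! Suc m)}"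

definition comp_inversions :: "(nat \<Rightarrow> int) \<Rightarrow> (nat \<Rightarrow> real) \<Rightarrow> nat list \<Rightarrow> complex \<Rightarrow> complex" where
  "comp_inversions c r is = foldr (\<lambda>i f. inversion (of_int (c i)) (r i) \<circ> f) is id"

definition multi_radius :: "(nat \<Rightarrow> int) \<Rightarrow> (nat \<Rightarrow> real) \<Rightarrow> nat list \<Rightarrow> real" where
  "multi_radius c r is = semicircle_radius
      (comp_inversions c r (butlast is) ` semicircle (of_int (c (last is))) (r (last is)))"

end

theory Submission
  imports Defs
begin


lemma alg_id:
  fixes x y e \<rho> R :: real
  assumes s: "x^2 + y^2 > 0" and E: "e^2 - \<rho>^2 \<noteq> 0"
  shows "(R^2*x/(x^2+y^2) - R^2*e/(e^2-\<rho>^2))^2 + (R^2*y/(x^2+y^2))^2 - (R^2*\<rho>/(e^2-\<rho>^2))^2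
       = R^4/((e^2-\<rho>^2)*(x^2+y^2)) * ((x-e)^2 + y^2 - \<rho>^2)"
proof -
  define S where "S = x^2+y^2"
  define F where "F = e^2-\<rho>^2"
  have S0: "S \<noteq> 0" and F0: "F \<noteq> 0" using s E by (auto simp: S_def F_def)
  have key: "(x*F - e*S)^2 + y^2*F^2 - \<rho>^2*S^2 = S*F*((x-e)^2 + y^2 - \<rho>^2)"
    unfolding S_def F_def by (simp add: power2_eq_square algebra_simps)
  have "(R^2*x/S - R^2*e/F)^2 + (R^2*y/S)^2 - (R^2*\<rho>/F)^2
        = R^4 * ((x*F - e*S)^2 + y^2*F^2 - \<rho>^2*S^2) / (S^2*F^2)"
    using S0 F0 by (simp add: field_simps power2_eq_square) algebra
  also have "\<dots> = R^4/(F*S) * ((x-e)^2 + y^2 - \<rho>^2)"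
    unfolding key using S0 F0 by (simp add: field_simps power2_eq_square)
  finally show ?thesis unfolding S_def F_def .
qed

lemma dist_real_eq:
  fixes z :: complex and p \<rho> :: real
  assumes "\<rho> > 0"
  shows "dist z (complex_of_real p) = \<rho> \<longleftrightarrow> (Re z - p)^2 + (Im z)^2 = \<rho>^2"
proof -
  have "dist z (complex_of_real p) = sqrt ((Re z - p)^2 + (Im z)^2)"
    by (simp add: dist_norm cmod_def)
  then show ?thesis using assms
    by (metis abs_of_pos real_sqrt_abs real_sqrt_ge_0_iff sum_power2_ge_zero power2_eq_iff_nonneg less_imp_le real_sqrt_pow2)
qed

lemma inversion_ReIm:
  assumes "Im z > 0"
  shows "Re (inversion c R z) = c + R^2 * (Re z - c) / ((Re z - c)^2 + (Im z)^2)"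
    and "Im (inversion c R z) = R^2 * Im z / ((Re z - c)^2 + (Im z)^2)"
  by (simp_all add: inversion_def Re_divide Im_divide power2_eq_square)

lemma inversion_invol:
  assumes "z \<noteq> complex_of_real c" "R \<noteq> 0"
  shows "inversion c R (inversion c R z) = z"
  using assms by (simp add: inversion_def field_simps)

lemma inv_key:
  assumes z: "Im z > 0" and E: "(a-c)^2 - \<rho>^2 \<noteq> 0"
  shows "Im (inversion c R z) > 0 \<or> R = 0"
    and "(Re (inversion c R z) - (c + R^2*(a-c)/((a-c)^2-\<rho>^2)))^2 + (Im (inversion c R z))^2
           - (R^2*\<rho>/((a-c)^2-\<rho>^2))^2
         = R^4/(((a-c)^2-\<rho>^2)*((Re z - c)^2 + (Im z)^2)) * ((Re z - a)^2 + (Im z)^2 - \<rho>^2)"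
proof -
  have s: "(Re z - c)^2 + (Im z)^2 > 0" using z by (simp add: add_nonneg_pos)
  show "Im (inversion c R z) > 0 \<or> R = 0"
    using s z by (auto simp: inversion_ReIm intro!: divide_pos_pos)
  have h1: "(Re (inversion c R z) - (c + R^2*(a-c)/((a-c)^2-\<rho>^2)))
      = R^2*(Re z - c)/((Re z - c)^2+(Im z)^2) - R^2*(a-c)/((a-c)^2-\<rho>^2)"
    using z by (simp add: inversion_ReIm)
  have h2: "Im (inversion c R z) = R^2*(Im z)/((Re z - c)^2+(Im z)^2)"
    using z by (simp add: inversion_ReIm)
  have d: "Re z - c - (a - c) = Re z - a" by simp
  show "(Re (inversion c R z) - (c + R^2*(a-c)/((a-c)^2-\<rho>^2)))^2 + (Im (inversion c R z))^2
           - (R^2*\<rho>/((a-c)^2-\<rho>^2))^2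
         = R^4/(((a-c)^2-\<rho>^2)*((Re z - c)^2 + (Im z)^2)) * ((Re z - a)^2 + (Im z)^2 - \<rho>^2)"
    unfolding h1 h2 by (rule alg_id[OF s E, of R, unfolded d])
qed

lemma mem_semicircle:
  assumes "\<rho> > 0"
  shows "z \<in> semicircle a \<rho> \<longleftrightarrow> Im z > 0 \<and> (Re z - a)^2 + (Im z)^2 - \<rho>^2 = 0"
  using dist_real_eq[OF assms, of z a] assms
  by (auto simp: semicircle_def upper_half_def dist_commute)

lemma inv_semicircle:
  assumes R: "R > 0" and \<rho>: "\<rho> > 0" and E: "(a-c)^2 > \<rho>^2"
  shows "inversion c R ` semicircle a \<rho> =
     semicircle (c + R^2*(a-c)/((a-c)^2-\<rho>^2)) (R^2*\<rho>/((a-c)^2-\<rho>^2))"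
proof -
  have E0: "(a-c)^2 - \<rho>^2 \<noteq> 0" "(a-c)^2 - \<rho>^2 > 0" using E by auto
  have \<rho>': "R^2*\<rho>/((a-c)^2-\<rho>^2) > 0" using R \<rho> E0 by simp
  let ?a = "c + R^2*(a-c)/((a-c)^2-\<rho>^2)" and ?r = "R^2*\<rho>/((a-c)^2-\<rho>^2)"
  have fac: "R^4/(((a-c)^2-\<rho>^2)*((Re z - c)^2 + (Im z)^2)) \<noteq> 0" if "Im z > 0" for z
    using that R E0 by (simp add: add_nonneg_pos)
  show ?thesis
  proof (intro equalityI subsetI)
    fix w assume "w \<in> inversion c R ` semicircle a \<rho>"
    then obtain z where z: "z \<in> semicircle a \<rho>" and w: "w = inversion c R z" by auto
    from z have zI: "Im z > 0" and z0: "(Re z - a)^2 + (Im z)^2 - \<rho>^2 = 0"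
      using mem_semicircle[OF \<rho>] by auto
    have "Im w > 0" using inv_key(1)[OF zI E0(1), of R] R w by auto
    moreover have "(Re w - ?a)^2 + (Im w)^2 - ?r^2 = 0"
      using inv_key(2)[OF zI E0(1), of R] z0 unfolding w[symmetric] by simp
    ultimately show "w \<in> semicircle ?a ?r"
      unfolding mem_semicircle[OF \<rho>'] by auto
  next
    fix w assume w: "w \<in> semicircle ?a ?r"
    then have wI: "Im w > 0" and w0: "(Re w - ?a)^2 + (Im w)^2 - ?r^2 = 0"
      using mem_semicircle[OF \<rho>'] by auto
    define z where "z = inversion c R w"
    have wc: "w \<noteq> complex_of_real c" using wI by auto
    have zw: "inversion c R z = w" unfolding z_def using inversion_invol[OF wc] R by simp
    have zI: "Im z > 0" unfolding z_def using inv_key(1)[OF wI E0(1), of R] R by auto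
    have "R^4/(((a-c)^2-\<rho>^2)*((Re z - c)^2 + (Im z)^2)) * ((Re z - a)^2 + (Im z)^2 - \<rho>^2) = 0"
      using inv_key(2)[OF zI E0(1), of R, unfolded zw] w0 by linarith
    then have "(Re z - a)^2 + (Im z)^2 - \<rho>^2 = 0"
      using fac[OF zI] zI by auto
    then have "z \<in> semicircle a \<rho>" using zI mem_semicircle[OF \<rho>] by auto
    then show "w \<in> inversion c R ` semicircle a \<rho>" using zw by force
  qed
qed

lemma semicircle_radius_eq:
  assumes "\<rho> > 0"
  shows "semicircle_radius (semicircle a \<rho>) = \<rho>"
  unfolding semicircle_radius_def
proof (rule the_equality)
  show "\<rho> > 0 \<and> (\<exists>c. semicircle a \<rho> = semicircle c \<rho>)" using assms by auto
next
  fix r assume "r > 0 \<and> (\<exists>c. semicircle a \<rho> = semicircle c r)"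
  then obtain b where r: "r > 0" and eq: "semicircle a \<rho> = semicircle b r" by auto
  have "Complex a \<rho> \<in> semicircle a \<rho>" using mem_semicircle[OF assms] assms by simp
  then have 1: "(a - b)^2 + \<rho>^2 - r^2 = 0" using eq mem_semicircle[OF r] by simp
  have "Complex b r \<in> semicircle b r" using mem_semicircle[OF r] r by simp
  then have 2: "(b - a)^2 + r^2 - \<rho>^2 = 0" using eq[symmetric] mem_semicircle[OF assms] by simp
  from 1 2 have "(a-b)^2 = 0" using power2_commute[of a b] by linarith
  then have "\<rho>^2 = r^2" using 1 by simp
  then show "r = \<rho>" using r assms by (simp add: power2_eq_iff_nonneg)
qed



definition Kf :: "real \<Rightarrow> real \<Rightarrow> real \<Rightarrow> real \<Rightarrow> real" where
  "Kf a1 p1 a2 p2 = ((a1-a2)^2 - p1^2 - p2^2)/(p1*p2)"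

definition newc :: "real \<Rightarrow> real \<Rightarrow> real \<Rightarrow> real \<Rightarrow> real" where
  "newc c R a \<rho> = c + R^2*(a-c)/((a-c)^2-\<rho>^2)"
definition newr :: "real \<Rightarrow> real \<Rightarrow> real \<Rightarrow> real \<Rightarrow> real" where
  "newr c R a \<rho> = R^2*\<rho>/((a-c)^2-\<rho>^2)"

lemma K_alg:
  fixes e1 e2 p1 p2 R :: real
  assumes "R \<noteq> 0" "p1 > 0" "p2 > 0" "e1^2 - p1^2 > 0" "e2^2 - p2^2 > 0"
  shows "((R^2*e1/(e1^2-p1^2) - R^2*e2/(e2^2-p2^2))^2 - (R^2*p1/(e1^2-p1^2))^2 - (R^2*p2/(e2^2-p2^2))^2)
          / ((R^2*p1/(e1^2-p1^2)) * (R^2*p2/(e2^2-p2^2)))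
       = ((e1-e2)^2 - p1^2 - p2^2)/(p1*p2)"
proof -
  define F1 where "F1 = e1^2-p1^2"
  define F2 where "F2 = e2^2-p2^2"
  have F: "F1 > 0" "F2 > 0" using assms by (auto simp: F1_def F2_def)
  have key: "(e1*F2 - e2*F1)^2 - p1^2*F2^2 - p2^2*F1^2 = F1*F2*((e1-e2)^2 - p1^2 - p2^2)"
    unfolding F1_def F2_def by (simp add: power2_eq_square algebra_simps)
  have "((R^2*e1/F1 - R^2*e2/F2)^2 - (R^2*p1/F1)^2 - (R^2*p2/F2)^2)
          = R^4 * ((e1*F2 - e2*F1)^2 - p1^2*F2^2 - p2^2*F1^2) / (F1^2*F2^2)"
    using F by (simp add: field_simps power2_eq_square) algebra
  also have "\<dots> = R^4 * ((e1-e2)^2 - p1^2 - p2^2) / (F1*F2)"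
    unfolding key using F by (simp add: field_simps power2_eq_square)
  finally have 1: "((R^2*e1/F1 - R^2*e2/F2)^2 - (R^2*p1/F1)^2 - (R^2*p2/F2)^2)
          = R^4 * ((e1-e2)^2 - p1^2 - p2^2) / (F1*F2)" .
  have 2: "(R^2*p1/F1) * (R^2*p2/F2) = R^4*(p1*p2)/(F1*F2)"
    using F by (simp add: field_simps power2_eq_square) algebra
  show ?thesis unfolding F1_def[symmetric] F2_def[symmetric] 1 2
    using F assms by (simp add: field_simps)
qed

lemma K_inv:
  assumes "R \<noteq> 0" "p1 > 0" "p2 > 0" "(a1-c)^2 - p1^2 > 0" "(a2-c)^2 - p2^2 > 0"
  shows "Kf (newc c R a1 p1) (newr c R a1 p1) (newc c R a2 p2) (newr c R a2 p2) = Kf a1 p1 a2 p2"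
proof -
  have d: "a1 - c - (a2 - c) = a1 - a2" by simp
  have "newc c R a1 p1 - newc c R a2 p2 = R^2*(a1-c)/((a1-c)^2-p1^2) - R^2*(a2-c)/((a2-c)^2-p2^2)"
    by (simp add: newc_def)
  then show ?thesis unfolding Kf_def
    using K_alg[OF assms, unfolded d] by (simp add: newr_def)
qed

lemma rad_lt:
  fixes e1 e2 p1 p2 :: real
  assumes p: "0 < p2" "p2 < p1" and n: "(e1-e2)^2 \<le> (p1-p2)^2" and e1: "e1^2 > p1^2"
  shows "e2^2 > p2^2" "p2*(e1^2-p1^2) < p1*(e2^2-p2^2)"
proof -
  define x where "x = \<bar>e1\<bar>"
  have x: "x > p1" using e1 p unfolding x_def
    by (metis abs_of_pos less_trans power2_less_imp_less abs_ge_zero power2_abs)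
  have "\<bar>e1 - e2\<bar> \<le> p1 - p2" using n p by (metis abs_le_square_iff abs_of_pos diff_gt_0_iff_gt)
  then have "\<bar>e2\<bar> \<ge> x - p1 + p2" unfolding x_def by linarith
  moreover have "x - p1 + p2 > 0" using x p by simp
  ultimately have e2: "e2^2 \<ge> (x - p1 + p2)^2"
    by (metis power2_abs power_mono less_imp_le)
  have "x - p1 + p2 > p2" using x by simp
  then have "(x - p1 + p2)^2 > p2^2" using p by (simp add: power_strict_mono)
  then show "e2^2 > p2^2" using e2 by simp
  have e1x: "e1^2 = x^2" unfolding x_def by simp
  have "p2*(e1^2-p1^2) = p2*(x-p1)*(x+p1)" unfolding e1x by (simp add: algebra_simps power2_eq_square)
  also have "\<dots> < p1*(x-p1)*(x-p1+2*p2)"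
  proof -
    have "(p1-p2)*(x-p1)^2 > 0" using p x by simp
    moreover have "p1*(x-p1)*(x-p1+2*p2) - p2*(x-p1)*(x+p1) = (p1-p2)*(x-p1)^2"
      by (simp add: algebra_simps power2_eq_square)
    ultimately show ?thesis by linarith
  qed
  also have "\<dots> = p1*((x - p1 + p2)^2 - p2^2)" by (simp add: algebra_simps power2_eq_square)
  also have "\<dots> \<le> p1*(e2^2-p2^2)" using e2 p by simp
  finally show "p2*(e1^2-p1^2) < p1*(e2^2-p2^2)" .
qed

lemma in_J_step:
  fixes e p R :: real
  assumes "R > 0" "p > 0" "\<bar>e\<bar> > p + R"
  shows "\<bar>R^2*e/(e^2-p^2)\<bar> + R^2*p/(e^2-p^2) \<le> R"
proof -
  have E: "e^2 - p^2 = (\<bar>e\<bar> - p)*(\<bar>e\<bar>+p)" by (simp add: algebra_simps power2_eq_square)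
  have pos: "\<bar>e\<bar> - p > 0" "\<bar>e\<bar> + p > 0" using assms by auto
  have "\<bar>R^2*e/(e^2-p^2)\<bar> = R^2*\<bar>e\<bar>/(e^2-p^2)" unfolding E using pos
    by (simp add: abs_mult abs_divide)
  then have "\<bar>R^2*e/(e^2-p^2)\<bar> + R^2*p/(e^2-p^2) = R^2*(\<bar>e\<bar>+p)/((\<bar>e\<bar> - p)*(\<bar>e\<bar>+p))"
    unfolding E by (simp add: add_divide_distrib algebra_simps)
  also have "\<dots> = R^2/(\<bar>e\<bar>-p)" using pos by simp
  also have "\<dots> \<le> R^2/R" using pos assms by (intro divide_left_mono) auto
  also have "\<dots> = R" using assms by (simp add: power2_eq_square)
  finally show ?thesis .
qed



lemma nest_iff:
  assumes "P1 > 0" "P2 > 0"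
  shows "(A1-A2)^2 \<le> (P1-P2)^2 \<longleftrightarrow> Kf A1 P1 A2 P2 \<le> -2"
proof -
  have "Kf A1 P1 A2 P2 \<le> -2 \<longleftrightarrow> (A1-A2)^2 - P1^2 - P2^2 \<le> -2*(P1*P2)"
    unfolding Kf_def using assms by (simp add: pos_divide_le_eq)
  also have "\<dots> \<longleftrightarrow> (A1-A2)^2 \<le> (P1-P2)^2" by (simp add: power2_eq_square algebra_simps)
  finally show ?thesis by simp
qed

lemma K0_calc:
  fixes a b x y :: real
  assumes "x > 0" "y > 0" "(b-a)^2 - y^2 > 0"
  shows "Kf a x (newc a x b y) (newr a x b y) = (x^2 + y^2 - (b-a)^2)/(x*y)"
proof -
  define E where "E = (b-a)^2 - y^2"
  have E: "E > 0" using assms E_def by simp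
  have 1: "a - newc a x b y = - (x^2*(b-a)/E)" by (simp add: newc_def E_def)
  have 2: "newr a x b y = x^2*y/E" by (simp add: newr_def E_def)
  have "(x^2*(b-a)/E)^2 - x^2 - (x^2*y/E)^2 = x^4*((b-a)^2 - y^2)/E^2 - x^2"
    using E by (simp add: field_simps power2_eq_square) algebra
  also have "\<dots> = x^4/E - x^2" unfolding E_def[symmetric] using E by (simp add: power2_eq_square)
  finally have 3: "(x^2*(b-a)/E)^2 - x^2 - (x^2*y/E)^2 = x^4/E - x^2" .
  have "Kf a x (newc a x b y) (newr a x b y) = (x^4/E - x^2)/(x*(x^2*y/E))"
    unfolding Kf_def 1 2 using 3 by simp
  also have "\<dots> = (x^2 - E)/(x*y)" using E assms by (simp add: field_simps power2_eq_square) algebra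
  also have "\<dots> = (x^2 + y^2 - (b-a)^2)/(x*y)" by (simp add: E_def)
  finally show ?thesis .
qed

lemma K0_bound:
  fixes D x y :: real
  assumes "D \<ge> 2" "0 < x" "x \<le> 1" "0 < y" "y \<le> 1"
  shows "(x^2 + y^2 - D^2)/(x*y) \<le> -(D^2-2)"
proof -
  have xy: "x*y \<le> 1" using assms by (metis mult_le_one less_imp_le)
  have a: "(x-y)^2 \<le> 1 - x*y"
  proof (cases "x \<le> y")
    case True
    have "x*x \<le> x*y" using True assms by (simp add: mult_left_mono)
    moreover have "y*y \<le> 1" using assms by (metis mult_le_one less_imp_le)
    ultimately show ?thesis by (simp add: power2_eq_square algebra_simps)
  next
    case False
    have "y*y \<le> x*y" using False assms by (simp add: mult_right_mono)
    moreover have "x*x \<le> 1" using assms by (metis mult_le_one less_imp_le)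
    ultimately show ?thesis by (simp add: power2_eq_square algebra_simps)
  qed
  have "D^2 \<ge> 1" using assms by (metis one_le_power dual_order.trans one_le_numeral)
  then have "D^2*(1-x*y) \<ge> 1-x*y" using xy mult_right_mono[of 1 "D^2" "1-x*y"] by simp
  with a have "D^2*(1-x*y) \<ge> (x-y)^2" by linarith
  then have "x^2 + y^2 - D^2 \<le> -(D^2-2)*(x*y)" by (simp add: power2_eq_square algebra_simps)
  then show ?thesis using assms by (simp add: pos_divide_le_eq)
qed

lemma fin:
  fixes P1 P2 A1 A2 D :: real
  assumes P: "0 < P2" "P2 < P1" and K: "Kf A1 P1 A2 P2 \<le> -(D^2-2)" and D: "D \<ge> 2"
  shows "P2 \<le> P1 * (1/(D-1))^2"
proof -
  define q where "q = D - 1"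
  have q: "q \<ge> 1" using D q_def by simp
  define M where "M = D^2 - 2"
  have "(A1-A2)^2 - P1^2 - P2^2 \<le> -M*(P1*P2)"
    using K P unfolding Kf_def M_def by (simp add: pos_divide_le_eq)
  then have "M*(P1*P2) \<le> P1^2 + P2^2" using zero_le_power2[of "A1-A2"] by linarith
  define t where "t = P2/P1"
  have t: "0 < t" "t < 1" using P by (auto simp: t_def)
  have P2t: "P2 = t*P1" using P by (simp add: t_def)
  have "M*t*P1^2 \<le> (1+t^2)*P1^2"
    using \<open>M*(P1*P2) \<le> P1^2 + P2^2\<close> unfolding P2t by (simp add: power2_eq_square algebra_simps)
  then have Mt: "M*t \<le> 1 + t^2" using P by simp
  define \<tau> where "\<tau> = 1/q^2"
  have \<tau>: "0 < \<tau>" "\<tau> \<le> 1" using q by (auto simp: \<tau>_def)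
  have M: "M \<ge> \<tau> + 1/\<tau>"
  proof -
    have "\<tau> \<le> 2*q - 1" using \<tau> q by simp
    moreover have "M = q^2 + 2*q - 1" unfolding M_def q_def by (simp add: power2_eq_square algebra_simps)
    moreover have "1/\<tau> = q^2" by (simp add: \<tau>_def)
    ultimately show ?thesis by simp
  qed
  have "t \<le> \<tau>"
  proof (rule ccontr)
    assume "\<not> t \<le> \<tau>"
    then have "t > \<tau>" by simp
    have "t < 1/\<tau>" using t \<tau> by (smt (verit) le_divide_eq_1_pos)
    have "(t - \<tau>)*(t - 1/\<tau>) < 0" using \<open>t > \<tau>\<close> \<open>t < 1/\<tau>\<close> by (simp add: mult_pos_neg)
    moreover have "(t - \<tau>)*(t - 1/\<tau>) = 1 + t^2 - (\<tau> + 1/\<tau>)*t"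
      using \<tau> by (simp add: field_simps power2_eq_square)
    moreover have "(\<tau> + 1/\<tau>)*t \<le> M*t" using M t by (simp add: mult_right_mono)
    ultimately show False using Mt by linarith
  qed
  then have "P1 * t \<le> P1 * \<tau>" using P by (intro mult_left_mono) auto
  then show ?thesis using P2t unfolding \<tau>_def q_def by (simp add: power_one_over mult.commute)
qed



definition chainok :: "nat list \<Rightarrow> bool" where
  "chainok xs = (\<forall>m. Suc m < length xs \<longrightarrow> xs ! m \<noteq> xs ! Suc m)"

lemma chainok_Cons: "chainok (x # ys) \<longleftrightarrow> (ys \<noteq> [] \<longrightarrow> x \<noteq> hd ys) \<and> chainok ys"
proof
  assume h: "chainok (x # ys)"
  have 1: "ys \<noteq> [] \<longrightarrow> x \<noteq> hd ys"
  proof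
    assume "ys \<noteq> []"
    then show "x \<noteq> hd ys" using h unfolding chainok_def
      by (cases ys) (auto elim!: allE[of _ 0])
  qed
  have 2: "chainok ys" unfolding chainok_def
  proof (intro allI impI)
    fix m assume "Suc m < length ys"
    then show "ys ! m \<noteq> ys ! Suc m" using h unfolding chainok_def
      by (auto elim!: allE[of _ "Suc m"])
  qed
  show "(ys \<noteq> [] \<longrightarrow> x \<noteq> hd ys) \<and> chainok ys" using 1 2 by blast
next
  assume h: "(ys \<noteq> [] \<longrightarrow> x \<noteq> hd ys) \<and> chainok ys"
  show "chainok (x # ys)" unfolding chainok_def
  proof (intro allI impI)
    fix m assume m: "Suc m < length (x # ys)"
    show "(x # ys) ! m \<noteq> (x # ys) ! Suc m"
    proof (cases m)
      case 0 then show ?thesis using h m by (cases ys) auto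
    next
      case (Suc m') then show ?thesis using h m unfolding chainok_def by auto
    qed
  qed
qed

lemma comp_Nil[simp]: "comp_inversions c r [] = id"
  by (simp add: comp_inversions_def)
lemma comp_Cons[simp]: "comp_inversions c r (x # L) = inversion (of_int (c x)) (r x) \<circ> comp_inversions c r L"
  by (simp add: comp_inversions_def)
lemma comp_snoc: "comp_inversions c r (L @ [x]) = comp_inversions c r L \<circ> inversion (of_int (c x)) (r x)"
  by (induction L) (auto simp: comp_inversions_def)

lemma chain:
  fixes c :: "nat \<Rightarrow> int" and r :: "nat \<Rightarrow> real"
  assumes rpos: "\<And>i. i \<ge> 1 \<Longrightarrow> 0 < r i"
    and sepr: "\<And>i j. i \<ge> 1 \<Longrightarrow> j \<ge> 1 \<Longrightarrow> i \<noteq> j \<Longrightarrow> \<bar>real_of_int (c i) - real_of_int (c j)\<bar> > r i + r j"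
    and L1: "\<forall>x\<in>set (L @ [l]). x \<ge> 1" and L2: "chainok (L @ [l])"
    and p: "0 < p2" "p2 < p1" and nest: "(a1-a2)^2 \<le> (p1-p2)^2"
    and J: "\<bar>a1 - real_of_int (c l)\<bar> + p1 \<le> r l"
  shows "\<exists>A1 P1 A2 P2. comp_inversions c r L ` semicircle a1 p1 = semicircle A1 P1 \<and>
           comp_inversions c r L ` semicircle a2 p2 = semicircle A2 P2 \<and> 0 < P2 \<and> P2 < P1 \<and>
           Kf A1 P1 A2 P2 = Kf a1 p1 a2 p2 \<and>
           \<bar>A1 - real_of_int (c (hd (L @ [l])))\<bar> + P1 \<le> r (hd (L @ [l]))"
  using L1 L2
proof (induction L)
  case Nil
  show ?case
    apply (rule exI[of _ a1], rule exI[of _ p1], rule exI[of _ a2], rule exI[of _ p2])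
    using p J by auto
next
  case (Cons x L)
  have L1': "\<forall>x\<in>set (L @ [l]). x \<ge> 1" using Cons.prems by auto
  have L2': "chainok (L @ [l])" and xne: "x \<noteq> hd (L @ [l])"
    using Cons.prems(2) by (auto simp: chainok_Cons)
  obtain A1 P1 A2 P2 where
    i1: "comp_inversions c r L ` semicircle a1 p1 = semicircle A1 P1" and
    i2: "comp_inversions c r L ` semicircle a2 p2 = semicircle A2 P2" and
    P: "0 < P2" "P2 < P1" and K: "Kf A1 P1 A2 P2 = Kf a1 p1 a2 p2" and
    J': "\<bar>A1 - real_of_int (c (hd (L @ [l])))\<bar> + P1 \<le> r (hd (L @ [l]))"
    using Cons.IH[OF L1' L2'] by blast
  define l' where "l' = hd (L @ [l])"
  have l'1: "l' \<ge> 1" using L1' unfolding l'_def by (cases L) auto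
  have x1: "x \<ge> 1" using Cons.prems by auto
  define C where "C = real_of_int (c x)"
  define R where "R = r x"
  have R: "R > 0" using rpos x1 R_def by simp
  have xl: "l' \<noteq> x" using xne l'_def by simp
  have s1: "\<bar>real_of_int (c l') - C\<bar> > r l' + R"
    using sepr[OF l'1 x1 xl] unfolding C_def R_def .
  have J'': "\<bar>A1 - real_of_int (c l')\<bar> + P1 \<le> r l'" using J' unfolding l'_def .
  have tri: "\<bar>real_of_int (c l') - C\<bar> \<le> \<bar>A1 - real_of_int (c l')\<bar> + \<bar>A1 - C\<bar>" by linarith
  have far: "\<bar>A1 - C\<bar> > P1 + R" using s1 J'' tri by linarith
  have "P1 < \<bar>A1 - C\<bar>" using far R by linarith
  then have "P1^2 < \<bar>A1 - C\<bar>^2" using P by (intro power_strict_mono) auto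
  then have E1: "(A1 - C)^2 > P1^2" by simp
  have nest': "(A1-A2)^2 \<le> (P1-P2)^2"
    using K nest nest_iff[of P1 P2 A1 A2] nest_iff[of p1 p2 a1 a2] P p by simp
  have E2: "(A2 - C)^2 > P2^2" and lt: "P2*((A1-C)^2-P1^2) < P1*((A2-C)^2-P2^2)"
    using rad_lt[OF P _ E1, of "A2 - C"] nest' by (simp_all add: power2_commute)
  have "comp_inversions c r (x # L) ` semicircle a1 p1 = inversion C R ` (comp_inversions c r L ` semicircle a1 p1)"
    by (simp add: C_def R_def image_image)
  also have "\<dots> = inversion C R ` semicircle A1 P1" using i1 by simp
  also have "\<dots> = semicircle (newc C R A1 P1) (newr C R A1 P1)"
    using inv_semicircle[OF R _ E1] P unfolding newc_def newr_def by simp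
  finally have img1: "comp_inversions c r (x # L) ` semicircle a1 p1 = semicircle (newc C R A1 P1) (newr C R A1 P1)" .
  have "comp_inversions c r (x # L) ` semicircle a2 p2 = inversion C R ` (comp_inversions c r L ` semicircle a2 p2)"
    by (simp add: C_def R_def image_image)
  also have "\<dots> = inversion C R ` semicircle A2 P2" using i2 by simp
  also have "\<dots> = semicircle (newc C R A2 P2) (newr C R A2 P2)"
    using inv_semicircle[OF R _ E2] P unfolding newc_def newr_def by simp
  finally have img2: "comp_inversions c r (x # L) ` semicircle a2 p2 = semicircle (newc C R A2 P2) (newr C R A2 P2)" .
  have pos2: "0 < newr C R A2 P2" using R P E2 by (simp add: newr_def)
  have lt2: "newr C R A2 P2 < newr C R A1 P1"
  proof -
    have e1: "(A1-C)^2-P1^2 > 0" and e2: "(A2-C)^2-P2^2 > 0" using E1 E2 by auto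
    have "P2 / ((A2-C)^2-P2^2) < P1 / ((A1-C)^2-P1^2)"
      using lt e1 e2 by (simp add: field_simps)
    then have "R^2 * (P2 / ((A2-C)^2-P2^2)) < R^2 * (P1 / ((A1-C)^2-P1^2))"
      using R by (intro mult_strict_left_mono) auto
    then show ?thesis unfolding newr_def by simp
  qed
  have Kn: "Kf (newc C R A1 P1) (newr C R A1 P1) (newc C R A2 P2) (newr C R A2 P2) = Kf a1 p1 a2 p2"
    using K_inv[of R P1 P2 A1 C A2] R P E1 E2 K by simp
  have Jn: "\<bar>newc C R A1 P1 - C\<bar> + newr C R A1 P1 \<le> R"
    using in_J_step[OF R _ far] P unfolding newc_def newr_def by simp
  show ?case
    apply (rule exI[of _ "newc C R A1 P1"], rule exI[of _ "newr C R A1 P1"],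
           rule exI[of _ "newc C R A2 P2"], rule exI[of _ "newr C R A2 P2"])
    using img1 img2 pos2 lt2 Kn Jn by (simp add: C_def R_def)
qed



lemma disj_sep:
  fixes a b x y :: real
  assumes "x > 0" "y > 0"
    and d: "cball (complex_of_real a) x \<inter> cball (complex_of_real b) y = {}"
  shows "\<bar>a - b\<bar> > x + y"
proof (rule ccontr)
  assume "\<not> \<bar>a - b\<bar> > x + y"
  then have le: "\<bar>a - b\<bar> \<le> x + y" by simp
  define p where "p = a + (b - a) * (x/(x+y))"
  have 1: "\<bar>a - p\<bar> = \<bar>a - b\<bar> * (x/(x+y))" using assms
    by (simp add: p_def abs_mult)
  have 2: "\<bar>b - p\<bar> = \<bar>a - b\<bar> * (y/(x+y))"
  proof -
    have "b - p = (b - a) * (y/(x+y))" using assms by (simp add: p_def field_simps)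
    then show ?thesis using assms by (simp add: abs_mult abs_minus_commute)
  qed
  have "\<bar>a - b\<bar> * (x/(x+y)) \<le> (x+y) * (x/(x+y))" using le assms by (intro mult_right_mono) auto
  then have "\<bar>a - p\<bar> \<le> x" using 1 assms by simp
  moreover have "\<bar>a - b\<bar> * (y/(x+y)) \<le> (x+y) * (y/(x+y))" using le assms by (intro mult_right_mono) auto
  then have "\<bar>b - p\<bar> \<le> y" using 2 assms by simp
  ultimately have "complex_of_real p \<in> cball (complex_of_real a) x \<inter> cball (complex_of_real b) y"
    by (simp add: dist_complex_def flip: of_real_diff)
  then show False using d by auto
qed



lemma radius_step:
  fixes c :: "nat \<Rightarrow> int" and r :: "nat \<Rightarrow> real"
  assumes rpos: "\<And>i. i \<ge> 1 \<Longrightarrow> 0 < r i"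
    and rle: "\<And>i. i \<ge> 1 \<Longrightarrow> r i \<le> 1"
    and sepr: "\<And>i j. i \<ge> 1 \<Longrightarrow> j \<ge> 1 \<Longrightarrow> i \<noteq> j \<Longrightarrow> \<bar>real_of_int (c i) - real_of_int (c j)\<bar> > r i + r j"
    and sep: "\<And>i j. i \<ge> 1 \<Longrightarrow> j \<ge> 1 \<Longrightarrow> i \<noteq> j \<Longrightarrow> \<bar>c i - c j\<bar> > 1"
    and js: "js \<noteq> []" "\<forall>x\<in>set js. x \<ge> 1" "chainok js"
    and m: "m \<ge> 1" "m \<noteq> last js"
  shows "0 < multi_radius c r js"
    and "0 < multi_radius c r (js @ [m])"
    and "multi_radius c r (js @ [m]) \<le> multi_radius c r js * (1 / (\<bar>real_of_int (c (last js) - c m)\<bar> - 1))^2"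
proof -
  obtain L j where jsL: "js = L @ [j]" using js(1) by (metis rev_exhaust)
  have j1: "j \<ge> 1" using js(2) jsL by auto
  have jm: "j \<noteq> m" using m jsL by auto
  define cj where "cj = real_of_int (c j)"
  define cm where "cm = real_of_int (c m)"
  have rj: "0 < r j" "r j \<le> 1" using rpos rle j1 by auto
  have rm: "0 < r m" "r m \<le> 1" using rpos rle m by auto
  have sjm: "\<bar>cj - cm\<bar> > r j + r m" using sepr[OF j1 m(1) jm] by (simp add: cj_def cm_def)
  have "\<bar>c j - c m\<bar> \<ge> 2" using sep[OF j1 m(1) jm] by simp
  then have D2: "\<bar>cj - cm\<bar> \<ge> 2" unfolding cj_def cm_def
    by (metis of_int_abs of_int_diff of_int_le_iff of_int_numeral)
  have sq: "(cm - cj)^2 > (r j + r m)^2"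
  proof -
    have "r j + r m < \<bar>cm - cj\<bar>" using sjm by (simp add: abs_minus_commute)
    then have "(r j + r m)^2 < \<bar>cm - cj\<bar>^2" using rj rm by (intro power_strict_mono) auto
    then show ?thesis by simp
  qed
  have E: "(cm - cj)^2 > (r m)^2"
  proof -
    have "(r j + r m)^2 \<ge> (r m)^2" using rj rm by (intro power_mono) auto
    then show ?thesis using sq by linarith
  qed
  define a2 where "a2 = newc cj (r j) cm (r m)"
  define p2 where "p2 = newr cj (r j) cm (r m)"
  have img0: "inversion cj (r j) ` semicircle cm (r m) = semicircle a2 p2"
    using inv_semicircle[OF rj(1) rm(1) E] unfolding a2_def p2_def newc_def newr_def by simp
  have E0: "(cm - cj)^2 - (r m)^2 > 0" using E by simp
  have p2pos: "0 < p2" unfolding p2_def newr_def using rj rm E0 by simp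
  have p2lt: "p2 < r j"
  proof -
    have "(r j + r m)^2 = (r j)^2 + 2 * (r j * r m) + (r m)^2" by (simp add: power2_eq_square algebra_simps)
    moreover have "(r j)^2 + r j * r m > 0" using rj rm by (intro add_pos_pos) auto
    ultimately have "r j * r m < (cm - cj)^2 - (r m)^2" using sq by linarith
    then have "r j * (r j * r m) < r j * ((cm - cj)^2 - (r m)^2)" using rj by simp
    then have "(r j)^2 * r m / ((cm - cj)^2 - (r m)^2) < r j" using E0
      by (simp add: divide_less_eq power2_eq_square algebra_simps)
    then show ?thesis unfolding p2_def newr_def by simp
  qed
  have K0: "Kf cj (r j) a2 p2 = ((r j)^2 + (r m)^2 - (cm - cj)^2)/(r j * r m)"
    unfolding a2_def p2_def using K0_calc[OF rj(1) rm(1) E0] .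
  have Dsq: "(cm - cj)^2 = \<bar>cj - cm\<bar>^2" by (simp add: power2_commute)
  have K0b: "Kf cj (r j) a2 p2 \<le> -(\<bar>cj - cm\<bar>^2 - 2)"
    unfolding K0 Dsq using K0_bound[OF D2 rj(1) rj(2) rm(1) rm(2)] .
  have nest: "(cj - a2)^2 \<le> (r j - p2)^2"
    using nest_iff[OF rj(1) p2pos, of cj a2] K0b D2
  proof -
    have "\<bar>cj - cm\<bar>^2 \<ge> 2^2" using D2 by (intro power_mono) auto
    then have "Kf cj (r j) a2 p2 \<le> -2" using K0b by simp
    then show ?thesis using nest_iff[OF rj(1) p2pos, of cj a2] by simp
  qed
  have Jj: "\<bar>cj - real_of_int (c j)\<bar> + r j \<le> r j" by (simp add: cj_def)
  have L1: "\<forall>x\<in>set (L @ [j]). x \<ge> 1" using js(2) jsL by simp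
  have L2: "chainok (L @ [j])" using js(3) jsL by simp
  obtain A1 P1 A2 P2 where
    i1: "comp_inversions c r L ` semicircle cj (r j) = semicircle A1 P1" and
    i2: "comp_inversions c r L ` semicircle a2 p2 = semicircle A2 P2" and
    P: "0 < P2" "P2 < P1" and K: "Kf A1 P1 A2 P2 = Kf cj (r j) a2 p2"
    using chain[of r c L j, OF rpos sepr L1 L2 p2pos p2lt nest Jj] by blast
  have R1: "multi_radius c r js = P1"
    unfolding multi_radius_def jsL using i1 P semicircle_radius_eq[of P1 A1]
    by (simp add: cj_def)
  have "comp_inversions c r (L @ [j]) ` semicircle cm (r m) = comp_inversions c r L ` (inversion cj (r j) ` semicircle cm (r m))"
    by (simp add: comp_snoc image_comp cj_def)
  also have "\<dots> = semicircle A2 P2" using img0 i2 by simp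
  finally have R2: "multi_radius c r (js @ [m]) = P2"
    unfolding multi_radius_def jsL butlast_snoc last_snoc using P semicircle_radius_eq[of P2 A2]
    by (simp add: cm_def)
  show "0 < multi_radius c r js" using R1 P by simp
  show "0 < multi_radius c r (js @ [m])" using R2 P by simp
  have "P2 \<le> P1 * (1/(\<bar>cj - cm\<bar> - 1))^2"
    using fin[OF P _ D2, of A1 A2] K K0b by simp
  then show "multi_radius c r (js @ [m]) \<le> multi_radius c r js * (1 / (\<bar>real_of_int (c (last js) - c m)\<bar> - 1))^2"
    using R1 R2 jsL by (simp add: cj_def cm_def)
qed



lemma infsum_cmult_ennreal:
  fixes a :: ennreal and f :: "'b \<Rightarrow> ennreal"
  assumes "a < top"
  shows "infsum (\<lambda>x. a * f x) A = a * infsum f A"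
proof -
  have "(f has_sum infsum f A) A" by (rule has_sum_infsum) (simp add: nonneg_summable_on_complete)
  then have "((\<lambda>F. sum f F) \<longlongrightarrow> infsum f A) (finite_subsets_at_top A)"
    by (simp add: has_sum_def)
  then have "((\<lambda>F. a * sum f F) \<longlongrightarrow> a * infsum f A) (finite_subsets_at_top A)"
    by (rule ennreal_tendsto_cmult[OF assms])
  then have "((\<lambda>x. a * f x) has_sum (a * infsum f A)) A"
    by (simp add: has_sum_def sum_distrib_left)
  then show ?thesis by (rule infsumI)
qed

lemma MI_snoc:
  assumes n: "n \<ge> 2"
  shows "multi_indices k n = (\<lambda>(js,m). js @ [m]) ` (SIGMA js:multi_indices k (n-1). {m. m > k \<and> m \<noteq> last js})"
proof (intro equalityI subsetI)
  fix xs assume xs: "xs \<in> multi_indices k n"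
  then have len: "length xs = n" and el: "\<forall>m\<in>set xs. m > k"
    and ch: "\<forall>m. Suc m < n \<longrightarrow> xs ! m \<noteq> xs ! Suc m" by (auto simp: multi_indices_def)
  have ne: "xs \<noteq> []" using len n by auto
  define js where "js = butlast xs"
  have xsd: "xs = js @ [last xs]" using ne by (simp add: js_def)
  have lj: "length js = n - 1" using len by (simp add: js_def)
  have "js \<in> multi_indices k (n-1)"
    unfolding multi_indices_def
  proof (intro CollectI conjI allI impI ballI)
    show "length js = n - 1" by (rule lj)
    fix m assume "m \<in> set js" then show "m > k" using el by (auto simp: js_def dest: in_set_butlastD)
  next
    fix m assume "Suc m < n - 1"
    then show "js ! m \<noteq> js ! Suc m" using ch lj by (simp add: js_def nth_butlast)
  qed
  moreover have "last xs \<noteq> last js"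
  proof -
    have jne: "js \<noteq> []" using lj n by auto
    have "last js = js ! (n - 2)" using jne lj by (simp add: last_conv_nth numeral_2_eq_2)
    also have "\<dots> = xs ! (n-2)" using lj n by (simp add: js_def nth_butlast)
    finally have "last js = xs ! (n-2)" .
    moreover have "last xs = xs ! (n - 1)" using ne len by (simp add: last_conv_nth)
    moreover have "Suc (n-2) = n - 1" "n - 1 < n" using n by auto
    ultimately show ?thesis using ch by metis
  qed
  moreover have "last xs > k" using el ne by simp
  ultimately show "xs \<in> (\<lambda>(js,m). js @ [m]) ` (SIGMA js:multi_indices k (n-1). {m. m > k \<and> m \<noteq> last js})"
    using xsd by (auto intro!: image_eqI[of _ _ "(js, last xs)"])
next
  fix xs assume "xs \<in> (\<lambda>(js,m). js @ [m]) ` (SIGMA js:multi_indices k (n-1). {m. m > k \<and> m \<noteq> last js})"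
  then obtain js m where xs: "xs = js @ [m]" and js: "js \<in> multi_indices k (n-1)"
    and m: "m > k" "m \<noteq> last js" by auto
  have lj: "length js = n - 1" and el: "\<forall>m\<in>set js. m > k"
    and ch: "\<forall>m. Suc m < n - 1 \<longrightarrow> js ! m \<noteq> js ! Suc m" using js by (auto simp: multi_indices_def)
  have jne: "js \<noteq> []" using lj n by auto
  show "xs \<in> multi_indices k n"
    unfolding multi_indices_def
  proof (intro CollectI conjI allI impI ballI)
    show "length xs = n" using xs lj n by simp
    fix i assume "i \<in> set xs" then show "i > k" using xs el m by auto
  next
    fix i assume i: "Suc i < n"
    show "xs ! i \<noteq> xs ! Suc i"
    proof (cases "Suc i < n - 1")
      case True
      then show ?thesis using ch xs lj by (simp add: nth_append)
    next
      case False
      then have si: "Suc i = n - 1" using i by simp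
      then have "xs ! Suc i = m" using xs lj by (simp add: nth_append)
      moreover have "xs ! i = last js"
      proof -
        have "i = length js - 1" using si lj by simp
        then show ?thesis using xs lj si jne by (simp add: nth_append last_conv_nth)
      qed
      ultimately show ?thesis using m by simp
    qed
  qed
qed

lemma fin_le_infsum_ennreal:
  fixes g :: "'a \<Rightarrow> ennreal"
  assumes "finite F" "F \<subseteq> A"
  shows "sum g F \<le> infsum g A"
proof -
  have "infsum g A = (SUP F\<in>{F. finite F \<and> F\<subseteq>A}. sum g F)"
    by (rule nonneg_infsum_complete) simp
  moreover have "sum g F \<le> (SUP F\<in>{F. finite F \<and> F\<subseteq>A}. sum g F)"
    using assms by (intro SUP_upper) auto
  ultimately show ?thesis by simp
qed

lemma infsum_Sigma_le_ennreal:
  fixes g :: "'a \<times> 'b \<Rightarrow> ennreal"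
  shows "infsum g (Sigma A B) \<le> infsum (\<lambda>x. infsum (\<lambda>y. g (x,y)) (B x)) A"
proof -
  have "infsum g (Sigma A B) = (SUP F\<in>{F. finite F \<and> F\<subseteq>Sigma A B}. sum g F)"
    by (rule nonneg_infsum_complete) simp
  also have "\<dots> \<le> infsum (\<lambda>x. infsum (\<lambda>y. g (x,y)) (B x)) A"
  proof (rule SUP_least)
    fix F assume F: "F \<in> {F. finite F \<and> F\<subseteq>Sigma A B}"
    then have fF: "finite F" and FS: "F \<subseteq> Sigma A B" by auto
    define C where "C x = {y. (x,y) \<in> F}" for x
    have FC: "F = Sigma (fst ` F) C" by (force simp: C_def)
    have fC: "finite (C x)" for x
    proof -
      have "C x \<subseteq> snd ` F" by (force simp: C_def)
      then show ?thesis using fF finite_subset by blast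
    qed
    have "sum g F = (\<Sum>x\<in>fst ` F. \<Sum>y\<in>C x. g (x,y))"
      by (subst FC, subst sum.Sigma) (use fF fC in auto)
    also have "\<dots> \<le> (\<Sum>x\<in>fst ` F. infsum (\<lambda>y. g (x,y)) (B x))"
    proof (rule sum_mono)
      fix x assume "x \<in> fst ` F"
      have "C x \<subseteq> B x" using FS by (auto simp: C_def)
      then show "(\<Sum>y\<in>C x. g (x,y)) \<le> infsum (\<lambda>y. g (x,y)) (B x)"
        using fC by (intro fin_le_infsum_ennreal) auto
    qed
    also have "\<dots> \<le> infsum (\<lambda>x. infsum (\<lambda>y. g (x,y)) (B x)) A"
      using fF FS by (intro fin_le_infsum_ennreal) auto
    finally show "sum g F \<le> infsum (\<lambda>x. infsum (\<lambda>y. g (x,y)) (B x)) A" .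
  qed
  finally show ?thesis .
qed

theorem lemma3p3:
  fixes c :: "nat \<Rightarrow> int" and r :: "nat \<Rightarrow> real" and k n :: nat and \<alpha> :: real
  assumes rpos: "\<And>i. i \<ge> 1 \<Longrightarrow> 0 < r i"
    and rle: "\<And>i. i \<ge> 1 \<Longrightarrow> r i \<le> 1"
    and disj: "\<And>i j. i \<ge> 1 \<Longrightarrow> j \<ge> 1 \<Longrightarrow> i \<noteq> j \<Longrightarrow>
                 cball (complex_of_real (of_int (c i))) (r i) \<inter>
                 cball (complex_of_real (of_int (c j))) (r j) = {}"
    and sep: "\<And>i j. i \<ge> 1 \<Longrightarrow> j \<ge> 1 \<Longrightarrow> i \<noteq> j \<Longrightarrow> \<bar>c i - c j\<bar> > 1"
    and alpha: "\<alpha> > 0"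
    and hyp: "(\<Sum>\<^sub>\<infinity> (i, j) \<in> {(i, j). i \<noteq> j \<and> i > k \<and> j > k}.
                 ennreal ((1 / (\<bar>real_of_int (c i - c j)\<bar> - 1)) powr (2 * \<alpha>))) \<le> 1"
    and n: "n \<ge> 2"
  shows "(\<Sum>\<^sub>\<infinity> is \<in> multi_indices k n. ennreal (multi_radius c r is powr \<alpha>))
         \<le> (\<Sum>\<^sub>\<infinity> js \<in> multi_indices k (n - 1). ennreal (multi_radius c r js powr \<alpha>))"
proof -
  have sepr: "\<And>i j. i \<ge> 1 \<Longrightarrow> j \<ge> 1 \<Longrightarrow> i \<noteq> j \<Longrightarrow> \<bar>real_of_int (c i) - real_of_int (c j)\<bar> > r i + r j"
  proof -
    fix i j :: nat assume ij: "i \<ge> 1" "j \<ge> 1" "i \<noteq> j"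
    show "\<bar>real_of_int (c i) - real_of_int (c j)\<bar> > r i + r j"
      using disj_sep[OF rpos[OF ij(1)] rpos[OF ij(2)] disj[OF ij]] by simp
  qed
  define f where "f is = ennreal (multi_radius c r is powr \<alpha>)" for "is"
  define w where "w i j = ennreal ((1 / (\<bar>real_of_int (c i - c j)\<bar> - 1)) powr (2 * \<alpha>))" for i j
  define B where "B js = {m. m > k \<and> m \<noteq> last js}" for js :: "nat list"
  define Pairs where "Pairs = {(i, j). i \<noteq> j \<and> i > k \<and> j > k}"
  have hyp': "infsum (\<lambda>(i,j). w i j) Pairs \<le> 1" using hyp unfolding w_def Pairs_def by simp
  have inj: "inj_on (\<lambda>(js,m). js @ [m]) (SIGMA js:multi_indices k (n-1). B js)"
    by (auto simp: inj_on_def)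
  have "infsum f (multi_indices k n) = infsum f ((\<lambda>(js,m). js @ [m]) ` (SIGMA js:multi_indices k (n-1). B js))"
    using MI_snoc[OF n] unfolding B_def by simp
  also have "\<dots> = infsum (f \<circ> (\<lambda>(js,m). js @ [m])) (SIGMA js:multi_indices k (n-1). B js)"
    by (rule infsum_reindex[OF inj])
  also have "\<dots> \<le> infsum (\<lambda>js. infsum (\<lambda>m. f (js @ [m])) (B js)) (multi_indices k (n-1))"
    using infsum_Sigma_le_ennreal[of "f \<circ> (\<lambda>(js,m). js @ [m])" "multi_indices k (n-1)" B] by simp
  also have "\<dots> \<le> infsum f (multi_indices k (n-1))"
  proof (rule infsum_mono)
    show "(\<lambda>js. infsum (\<lambda>m. f (js @ [m])) (B js)) summable_on multi_indices k (n-1)" by (simp add: nonneg_summable_on_complete)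
    show "f summable_on multi_indices k (n-1)" by (simp add: nonneg_summable_on_complete)
    fix js assume js: "js \<in> multi_indices k (n-1)"
    then have lj: "length js = n - 1" and el: "\<forall>m\<in>set js. m > k"
      and ch: "\<forall>m. Suc m < n - 1 \<longrightarrow> js ! m \<noteq> js ! Suc m" by (auto simp: multi_indices_def)
    have jne: "js \<noteq> []" using lj n by auto
    have el1: "\<forall>x\<in>set js. x \<ge> 1"
    proof
      fix x assume "x \<in> set js"
      then have "x > k" using el by blast
      then show "x \<ge> 1" by simp
    qed
    have cho: "chainok js" using ch lj by (simp add: chainok_def)
    define j where "j = last js"
    define R where "R = multi_radius c r js"
    have Rpos: "R > 0" unfolding R_def using radius_step(1)[OF rpos rle sepr sep jne el1 cho, where m="Suc (last js)"]
      by simp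
    have termb: "f (js @ [m]) \<le> ennreal (R powr \<alpha>) * w j m" if m: "m \<in> B js" for m
    proof -
      have m1: "m \<ge> 1" "m \<noteq> last js" using m by (auto simp: B_def)
      have st: "multi_radius c r (js @ [m]) \<le> R * (1 / (\<bar>real_of_int (c j - c m)\<bar> - 1))^2"
        and p2: "0 < multi_radius c r (js @ [m])"
        using radius_step[OF rpos rle sepr sep jne el1 cho m1] unfolding R_def j_def by auto
      have jm: "j \<noteq> m" using m1 j_def by simp
      have j1: "j \<ge> 1" using el1 jne j_def by simp
      have "\<bar>c j - c m\<bar> \<ge> 2" using sep[OF j1 m1(1) jm] by simp
      then have "real_of_int 2 \<le> real_of_int \<bar>c j - c m\<bar>" by (simp only: of_int_le_iff)
      then have D: "\<bar>real_of_int (c j - c m)\<bar> \<ge> 2" by simp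
      define q where "q = 1 / (\<bar>real_of_int (c j - c m)\<bar> - 1)"
      have q: "q > 0" using D q_def by simp
      have "multi_radius c r (js @ [m]) powr \<alpha> \<le> (R * q^2) powr \<alpha>"
        using st p2 alpha unfolding q_def by (intro powr_mono2) auto
      also have "\<dots> = R powr \<alpha> * (q^2) powr \<alpha>" using Rpos q by (simp add: powr_mult)
      also have "(q^2) powr \<alpha> = q powr (2*\<alpha>)"
      proof -
        have "q^2 = q powr 2" using q by (simp add: powr_numeral)
        then show ?thesis by (simp add: powr_powr)
      qed
      finally have "multi_radius c r (js @ [m]) powr \<alpha> \<le> R powr \<alpha> * q powr (2*\<alpha>)" .
      then have "ennreal (multi_radius c r (js @ [m]) powr \<alpha>) \<le> ennreal (R powr \<alpha> * q powr (2*\<alpha>))"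
        by (rule ennreal_leI)
      also have "\<dots> = ennreal (R powr \<alpha>) * ennreal (q powr (2*\<alpha>))"
        by (rule ennreal_mult) auto
      finally show ?thesis unfolding f_def w_def q_def .
    qed
    have row: "infsum (w j) (B js) \<le> 1"
    proof -
      have "infsum (w j) (B js) = infsum (\<lambda>(i,m). w i m) ((\<lambda>m. (j, m)) ` B js)"
        by (subst infsum_reindex) (auto simp: inj_on_def o_def)
      also have "\<dots> \<le> infsum (\<lambda>(i,m). w i m) Pairs"
      proof (rule infsum_mono_neutral)
        have "j > k" using el jne j_def by simp
        then show "\<And>x. x \<in> (\<lambda>m. (j, m)) ` B js - Pairs \<Longrightarrow> (case x of (i, m) \<Rightarrow> w i m) \<le> 0"
          by (auto simp: B_def Pairs_def j_def)
      qed (auto simp: nonneg_summable_on_complete)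
      also have "\<dots> \<le> 1" by (rule hyp')
      finally show ?thesis .
    qed
    have "infsum (\<lambda>m. f (js @ [m])) (B js) \<le> infsum (\<lambda>m. ennreal (R powr \<alpha>) * w j m) (B js)"
      by (rule infsum_mono) (auto intro: termb simp: nonneg_summable_on_complete)
    also have "\<dots> = ennreal (R powr \<alpha>) * infsum (w j) (B js)"
      by (rule infsum_cmult_ennreal) simp
    also have "\<dots> \<le> ennreal (R powr \<alpha>) * 1" using row by (intro mult_left_mono) auto
    finally show "infsum (\<lambda>m. f (js @ [m])) (B js) \<le> f js" by (simp add: f_def R_def)
  qed
  finally show ?thesis unfolding f_def .
qed

end
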